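(* For every positive integer $h$ there exist positive integers $s,r,R$ with $s,r\ge 2$ such that $\delta=(r+1)(R+1)-sr-1=-h$ and $\mathrm{Perf}(s,r,R)=\emptyset$.
   Context: $q$ is a prime power, $\mathbb F_q^{s\times r}$ the set of $s\times r$ matrices over $\mathbb F_q$ with rows in $\mathbb F_q^{1\times r}$. For a row $y=(y_1,\dots,y_r)$, the NRT weight is $w(y)=\max\{j: y_j\neq 0\}$ if $y\ne0$ and $w(0)=0$; for a matrix, $w(x)=\sum_i w(x_i)$. The NRT metric is $d(x,y)=w(x-y)$; $B(c,R)=\{x: d(x,c)\le R\}$. A code $C$ is $R$-perfect if the balls $B(c,R)$, $c\in C$, are pairwise disjoint and cover $\mathbb F_q^{s\times r}$; non-trivial means $|C|>1$ and $C\ne\mathbb F_q^{s\times r}$. $\mathrm{Perf}(s,r,R)$ is the set of non-trivial $R$-perfect codes in $\mathbb F_q^{s\times r}$. *)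

theory Defs
  imports Main
begin

text \<open>Matrices in F_q^{s x r} are represented as functions nat => nat => 'a
  (row index i < s, column index j < r, both 0-based) vanishing outside the box.
  The field F_q is an arbitrary finite field type 'a (q = CARD('a)).\<close>

definition mat_space :: "nat \<Rightarrow> nat \<Rightarrow> (nat \<Rightarrow> nat \<Rightarrow> 'a::zero) set" where
  "mat_space s r = {x. \<forall>i j. (s \<le> i \<or> r \<le> j) \<longrightarrow> x i j = 0}"

definition row_weight :: "nat \<Rightarrow> (nat \<Rightarrow> 'a::zero) \<Rightarrow> nat" where
  "row_weight r y = (if \<exists>j<r. y j \<noteq> 0 then Suc (Max {j. j < r \<and> y j \<noteq> 0}) else 0)"

definition nrt_weight :: "nat \<Rightarrow> nat \<Rightarrow> (nat \<Rightarrow> nat \<Rightarrow> 'a::zero) \<Rightarrow> nat" where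
  "nrt_weight s r x = (\<Sum>i<s. row_weight r (x i))"

definition nrt_dist :: "nat \<Rightarrow> nat \<Rightarrow> (nat \<Rightarrow> nat \<Rightarrow> 'a::group_add) \<Rightarrow> (nat \<Rightarrow> nat \<Rightarrow> 'a) \<Rightarrow> nat" where
  "nrt_dist s r x y = nrt_weight s r (\<lambda>i j. x i j - y i j)"

definition nrt_ball :: "nat \<Rightarrow> nat \<Rightarrow> (nat \<Rightarrow> nat \<Rightarrow> 'a::group_add) \<Rightarrow> nat \<Rightarrow> (nat \<Rightarrow> nat \<Rightarrow> 'a) set" where
  "nrt_ball s r c R = {x \<in> mat_space s r. nrt_dist s r x c \<le> R}"

definition perfect_code :: "nat \<Rightarrow> nat \<Rightarrow> nat \<Rightarrow> (nat \<Rightarrow> nat \<Rightarrow> 'a::group_add) set \<Rightarrow> bool" where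
  "perfect_code s r R C \<longleftrightarrow> C \<subseteq> mat_space s r
     \<and> (\<forall>c\<in>C. \<forall>c'\<in>C. c \<noteq> c' \<longrightarrow> nrt_ball s r c R \<inter> nrt_ball s r c' R = {})
     \<and> (\<Union>c\<in>C. nrt_ball s r c R) = mat_space s r"

definition Perf :: "nat \<Rightarrow> nat \<Rightarrow> nat \<Rightarrow> (nat \<Rightarrow> nat \<Rightarrow> 'a::group_add) set set" where
  "Perf s r R = {C. perfect_code s r R C \<and> card C > 1 \<and> C \<noteq> mat_space s r}"

end

theory Submission
  imports Defs "HOL-Computational_Algebra.Primes"
begin

definition rowsp :: "nat \<Rightarrow> (nat \<Rightarrow> 'a::zero) set" where
  "rowsp r = {y. \<forall>j. r \<le> j \<longrightarrow> y j = 0}"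

definition Wb :: "nat \<Rightarrow> nat \<Rightarrow> nat \<Rightarrow> (nat \<Rightarrow> nat \<Rightarrow> 'a::zero) set" where
  "Wb s r R = {x \<in> mat_space s r. nrt_weight s r x \<le> R}"

lemma rowsp_Suc: "rowsp (Suc r) = (\<lambda>(y,a). y(r:=a)) ` (rowsp r \<times> UNIV)"
proof (rule set_eqI, rule iffI)
  fix y :: "nat \<Rightarrow> 'a" assume "y \<in> rowsp (Suc r)"
  then have "y = (\<lambda>(y,a). y(r:=a)) (y(r:=0), y r)" "(y(r:=0), y r) \<in> rowsp r \<times> UNIV"
    by (auto simp: rowsp_def)
  then show "y \<in> (\<lambda>(y,a). y(r:=a)) ` (rowsp r \<times> UNIV)" by blast
qed (auto simp: rowsp_def)

lemma rowsp_inj: "inj_on (\<lambda>(y,a). y(r:=a)) (rowsp r \<times> (UNIV::'a::zero set))"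
  unfolding inj_on_def rowsp_def
  by (auto simp: fun_eq_iff)

lemma finite_rowsp: "finite (rowsp r :: (nat \<Rightarrow> 'a::{zero,finite}) set)"
proof (induction r)
  case 0
  have "rowsp 0 = {(\<lambda>_. 0) :: nat \<Rightarrow> 'a}" by (auto simp: rowsp_def)
  then show ?case by simp
next
  case (Suc r) then show ?case by (simp add: rowsp_Suc)
qed

lemma mat_Suc: "mat_space (Suc s) r = (\<lambda>(z,x). x(s:=z)) ` (rowsp r \<times> mat_space s r)"
proof (rule set_eqI, rule iffI)
  fix w :: "nat \<Rightarrow> nat \<Rightarrow> 'a" assume w: "w \<in> mat_space (Suc s) r"
  have "w = (\<lambda>(z,x). x(s:=z)) (w s, w(s:=(\<lambda>_. 0)))" by auto
  moreover have "(w s, w(s:=(\<lambda>_. 0))) \<in> rowsp r \<times> mat_space s r"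
    using w by (auto simp: rowsp_def mat_space_def)
  ultimately show "w \<in> (\<lambda>(z,x). x(s:=z)) ` (rowsp r \<times> mat_space s r)" by blast
next
  fix w :: "nat \<Rightarrow> nat \<Rightarrow> 'a" assume "w \<in> (\<lambda>(z,x). x(s:=z)) ` (rowsp r \<times> mat_space s r)"
  then show "w \<in> mat_space (Suc s) r"
    by (auto simp: rowsp_def mat_space_def)
qed

lemma mat_inj: "inj_on (\<lambda>(z,x). x(s:=z)) (rowsp r \<times> (mat_space s r :: (nat \<Rightarrow> nat \<Rightarrow> 'a::zero) set))"
proof (rule inj_onI, clarify)
  fix z x z' x' assume a: "z \<in> rowsp r" "x \<in> (mat_space s r :: (nat \<Rightarrow> nat \<Rightarrow> 'a) set)"
    "z' \<in> rowsp r" "x' \<in> mat_space s r" and e: "x(s := z) = x'(s := z')"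
  have "z = z'" using fun_cong[OF e, of s] by simp
  moreover have "x = x'"
  proof
    fix i show "x i = x' i"
    proof (cases "i = s")
      case True then show ?thesis using a by (auto simp: mat_space_def)
    next
      case False then show ?thesis using fun_cong[OF e, of i] by simp
    qed
  qed
  ultimately show "z = z' \<and> x = x'" by simp
qed

lemma finite_mat: "finite (mat_space s r :: (nat \<Rightarrow> nat \<Rightarrow> 'a::{zero,finite}) set)"
proof (induction s)
  case 0
  have "mat_space 0 r = {(\<lambda>_ _. 0) :: nat \<Rightarrow> nat \<Rightarrow> 'a}" by (auto simp: mat_space_def)
  then show ?case by simp
next
  case (Suc s) then show ?case by (simp add: mat_Suc finite_rowsp)
qed

lemma weight_upd:
  assumes "x \<in> mat_space s r"
  shows "nrt_weight (Suc s) r (x(s:=z)) = nrt_weight s r x + row_weight r z"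
  unfolding nrt_weight_def by (simp add: lessThan_Suc)

lemma W_Suc: "Wb (Suc s) r R = (\<lambda>(z,x). x(s:=z)) `
   (SIGMA z:{z\<in>rowsp r. row_weight r z \<le> R}. (Wb s r (R - row_weight r z) :: (nat \<Rightarrow> nat \<Rightarrow> 'a::zero) set))"
proof (rule set_eqI, rule iffI)
  fix w :: "nat \<Rightarrow> nat \<Rightarrow> 'a" assume "w \<in> Wb (Suc s) r R"
  then have w: "w \<in> mat_space (Suc s) r" "nrt_weight (Suc s) r w \<le> R" by (auto simp: Wb_def)
  then obtain z x where zx: "z \<in> rowsp r" "x \<in> mat_space s r" "w = x(s:=z)"
    unfolding mat_Suc by auto
  then show "w \<in> (\<lambda>(z,x). x(s:=z)) ` (SIGMA z:{z\<in>rowsp r. row_weight r z \<le> R}. Wb s r (R - row_weight r z))"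
    using w(2) weight_upd[OF zx(2), of z] by (force simp: Wb_def)
next
  fix w :: "nat \<Rightarrow> nat \<Rightarrow> 'a"
  assume "w \<in> (\<lambda>(z,x). x(s:=z)) ` (SIGMA z:{z\<in>rowsp r. row_weight r z \<le> R}. Wb s r (R - row_weight r z))"
  then obtain z x where zx: "z \<in> rowsp r" "x \<in> mat_space s r" "w = x(s:=z)"
    "row_weight r z \<le> R" "nrt_weight s r x \<le> R - row_weight r z"
    by (auto simp: Wb_def)
  then show "w \<in> Wb (Suc s) r R"
    using weight_upd[OF zx(2), of z] mat_Suc[of s r] by (auto simp: Wb_def)
qed

lemma card_W_Suc:
  "card (Wb (Suc s) r R :: (nat \<Rightarrow> nat \<Rightarrow> 'a::{zero,finite}) set) =
   (\<Sum>w\<in>{..R}. card {z\<in>(rowsp r :: (nat \<Rightarrow> 'a) set). row_weight r z = w} * card (Wb s r (R - w) :: (nat \<Rightarrow> nat \<Rightarrow> 'a) set))"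
proof -
  let ?S = "SIGMA z:{z\<in>(rowsp r :: (nat \<Rightarrow> 'a) set). row_weight r z \<le> R}. (Wb s r (R - row_weight r z) :: (nat \<Rightarrow> nat \<Rightarrow> 'a) set)"
  have inj: "inj_on (\<lambda>(z,x). x(s:=z)) ?S"
    by (rule inj_on_subset[OF mat_inj]) (auto simp: Wb_def)
  have fW: "\<And>k. finite (Wb s r k :: (nat \<Rightarrow> nat \<Rightarrow> 'a) set)"
    unfolding Wb_def by (rule finite_subset[OF _ finite_mat]) auto
  have fZ: "finite {z\<in>(rowsp r :: (nat \<Rightarrow> 'a) set). row_weight r z \<le> R}"
    by (rule finite_subset[OF _ finite_rowsp]) auto
  have "card (Wb (Suc s) r R :: (nat \<Rightarrow> nat \<Rightarrow> 'a) set) = card ?S"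
    unfolding W_Suc by (rule card_image[OF inj])
  also have "\<dots> = (\<Sum>z\<in>{z\<in>(rowsp r :: (nat \<Rightarrow> 'a) set). row_weight r z \<le> R}. card (Wb s r (R - row_weight r z) :: (nat \<Rightarrow> nat \<Rightarrow> 'a) set))"
    using fZ fW by simp
  also have "\<dots> = (\<Sum>w\<in>{..R}. \<Sum>z\<in>{z. z \<in> {z\<in>(rowsp r :: (nat \<Rightarrow> 'a) set). row_weight r z \<le> R} \<and> row_weight r z = w}. card (Wb s r (R - row_weight r z) :: (nat \<Rightarrow> nat \<Rightarrow> 'a) set))"
    by (rule sum.group[symmetric]) (use fZ in auto)
  also have "\<dots> = (\<Sum>w\<in>{..R}. card {z\<in>(rowsp r :: (nat \<Rightarrow> 'a) set). row_weight r z = w} * card (Wb s r (R - w) :: (nat \<Rightarrow> nat \<Rightarrow> 'a) set))"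
  proof (rule sum.cong[OF refl])
    fix w assume "w \<in> {..R}"
    then have "{z. z \<in> {z\<in>(rowsp r :: (nat \<Rightarrow> 'a) set). row_weight r z \<le> R} \<and> row_weight r z = w}
       = {z\<in>(rowsp r :: (nat \<Rightarrow> 'a) set). row_weight r z = w}" by auto
    then show "(\<Sum>z\<in>{z. z \<in> {z\<in>(rowsp r :: (nat \<Rightarrow> 'a) set). row_weight r z \<le> R} \<and> row_weight r z = w}. card (Wb s r (R - row_weight r z) :: (nat \<Rightarrow> nat \<Rightarrow> 'a) set))
      = card {z\<in>(rowsp r :: (nat \<Rightarrow> 'a) set). row_weight r z = w} * card (Wb s r (R - w) :: (nat \<Rightarrow> nat \<Rightarrow> 'a) set)"
      by simp
  qed
  finally show ?thesis .
qed


lemma rw_Suc: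
  assumes z: "z \<in> rowsp r" and k: "k < r"
  shows "row_weight r z = Suc k \<longleftrightarrow> z k \<noteq> 0 \<and> (\<forall>j>k. z j = 0)"
proof
  assume h: "row_weight r z = Suc k"
  then have ex: "\<exists>j<r. z j \<noteq> 0" by (auto simp: row_weight_def split: if_splits)
  then have M: "Max {j. j < r \<and> z j \<noteq> 0} = k" using h by (auto simp: row_weight_def)
  have fin: "finite {j. j < r \<and> z j \<noteq> 0}" by simp
  have "k \<in> {j. j < r \<and> z j \<noteq> 0}" unfolding M[symmetric] using ex fin
    by (intro Max_in) auto
  moreover have "\<forall>j>k. z j = 0"
  proof (intro allI impI)
    fix j assume "k < j"
    show "z j = 0"
    proof (cases "j < r")
      case True
      then show ?thesis using Max_ge[OF fin, of j] M \<open>k < j\<close> by fastforce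
    next
      case False then show ?thesis using z by (auto simp: rowsp_def)
    qed
  qed
  ultimately show "z k \<noteq> 0 \<and> (\<forall>j>k. z j = 0)" by auto
next
  assume h: "z k \<noteq> 0 \<and> (\<forall>j>k. z j = 0)"
  have "Max {j. j < r \<and> z j \<noteq> 0} = k"
    by (rule Max_eqI) (use h k in \<open>auto simp: not_less[symmetric]\<close>)
  then show "row_weight r z = Suc k" using h k by (auto simp: row_weight_def)
qed

lemma rw0:
  assumes z: "z \<in> rowsp r"
  shows "row_weight r z = 0 \<longleftrightarrow> z = (\<lambda>_. 0)"
proof
  assume "row_weight r z = 0"
  then have "\<forall>j<r. z j = 0" by (auto simp: row_weight_def split: if_splits)
  then show "z = (\<lambda>_. 0)" using z by (auto simp: rowsp_def fun_eq_iff not_less[symmetric])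
qed (auto simp: row_weight_def)

lemma cnt0: "card {z\<in>(rowsp r :: (nat \<Rightarrow> 'a::zero) set). row_weight r z = 0} = 1"
proof -
  have "{z\<in>(rowsp r :: (nat \<Rightarrow> 'a) set). row_weight r z = 0} = {\<lambda>_. 0}"
    using rw0 by (auto simp: rowsp_def)
  then show ?thesis by simp
qed

lemma cnt1:
  assumes "1 \<le> r"
  shows "card {z\<in>(rowsp r :: (nat \<Rightarrow> 'a::{zero,finite}) set). row_weight r z = 1} = card (UNIV::'a set) - 1"
proof -
  have "{z\<in>(rowsp r :: (nat \<Rightarrow> 'a) set). row_weight r z = 1} = (\<lambda>a. (\<lambda>_. 0)(0:=a)) ` (UNIV - {0})"
  proof (rule set_eqI, rule iffI)
    fix z :: "nat \<Rightarrow> 'a" assume "z \<in> {z\<in>rowsp r. row_weight r z = 1}"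
    then have "z \<in> rowsp r" "row_weight r z = Suc 0" by auto
    then have h: "z 0 \<noteq> 0" "\<forall>j>0. z j = 0" using rw_Suc[of z r 0] assms by auto
    then have "z = (\<lambda>_. 0)(0:= z 0)" by (auto simp: fun_eq_iff)
    then show "z \<in> (\<lambda>a. (\<lambda>_. 0)(0:=a)) ` (UNIV - {0})" using h by blast
  next
    fix z :: "nat \<Rightarrow> 'a" assume "z \<in> (\<lambda>a. (\<lambda>_. 0)(0:=a)) ` (UNIV - {0})"
    then obtain a where a: "a \<noteq> 0" "z = (\<lambda>_. 0)(0:=a)" by auto
    then have zr: "z \<in> rowsp r" using assms by (auto simp: rowsp_def)
    have "row_weight r z = Suc 0" using rw_Suc[OF zr, of 0] assms a by auto
    then show "z \<in> {z\<in>rowsp r. row_weight r z = 1}" using zr by simp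
  qed
  moreover have "inj_on (\<lambda>a. ((\<lambda>_. 0)(0:=a)) :: nat \<Rightarrow> 'a) (UNIV - {0})"
    by (rule inj_onI) (metis fun_upd_same)
  ultimately show ?thesis by (simp add: card_image card_Diff_singleton)
qed

lemma cnt2:
  assumes "2 \<le> r"
  shows "card {z\<in>(rowsp r :: (nat \<Rightarrow> 'a::{zero,finite}) set). row_weight r z = 2} = card (UNIV::'a set) * (card (UNIV::'a set) - 1)"
proof -
  have "{z\<in>(rowsp r :: (nat \<Rightarrow> 'a) set). row_weight r z = 2} = (\<lambda>(a,b). (\<lambda>_. 0)(0:=a, 1:=b)) ` (UNIV \<times> (UNIV - {0}))"
  proof (rule set_eqI, rule iffI)
    fix z :: "nat \<Rightarrow> 'a" assume "z \<in> {z\<in>rowsp r. row_weight r z = 2}"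
    then have "z \<in> rowsp r" "row_weight r z = Suc 1" by auto
    then have h: "z 1 \<noteq> 0" "\<forall>j>1. z j = 0" using rw_Suc[of z r 1] assms by auto
    then have "z = (\<lambda>_. 0)(0:= z 0, 1:= z 1)" by (auto simp: fun_eq_iff)
    then show "z \<in> (\<lambda>(a,b). (\<lambda>_. 0)(0:=a, 1:=b)) ` (UNIV \<times> (UNIV - {0}))" using h
      by (intro image_eqI[where x="(z 0, z 1)"]) auto
  next
    fix z :: "nat \<Rightarrow> 'a" assume "z \<in> (\<lambda>(a,b). (\<lambda>_. 0)(0:=a, 1:=b)) ` (UNIV \<times> (UNIV - {0}))"
    then obtain a b where a: "b \<noteq> 0" "z = (\<lambda>_. 0)(0:=a, 1:=b)" by auto
    then have zr: "z \<in> rowsp r" using assms by (auto simp: rowsp_def)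
    have "row_weight r z = Suc 1" using rw_Suc[OF zr, of 1] assms a by auto
    then show "z \<in> {z\<in>rowsp r. row_weight r z = 2}" using zr by simp
  qed
  moreover have "inj_on (\<lambda>(a,b). ((\<lambda>_. 0)(0:=a, 1:=b)) :: nat \<Rightarrow> 'a) (UNIV \<times> (UNIV - {0}))"
  proof (rule inj_onI)
    fix x y :: "'a \<times> 'a"
    assume e: "(case x of (a,b) \<Rightarrow> ((\<lambda>_. 0)(0:=a, 1:=b) :: nat \<Rightarrow> 'a)) = (case y of (a,b) \<Rightarrow> (\<lambda>_. 0)(0:=a, 1:=b))"
    obtain a b c d where xy: "x=(a,b)" "y=(c,d)" by (cases x, cases y)
    show "x = y" using fun_cong[OF e, of 0] fun_cong[OF e, of 1] xy by simp
  qed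
  ultimately show ?thesis by (simp add: card_image card_Diff_singleton card_cartesian_product)
qed

lemma W0: "card (Wb 0 r R :: (nat \<Rightarrow> nat \<Rightarrow> 'a::zero) set) = 1"
proof -
  have "(Wb 0 r R :: (nat \<Rightarrow> nat \<Rightarrow> 'a) set) = {\<lambda>_ _. 0}"
    by (auto simp: Wb_def mat_space_def nrt_weight_def)
  then show ?thesis by simp
qed

lemma N_formula:
  assumes "2 \<le> r" and q: "card (UNIV::'a::{zero,finite} set) = Suc p"
  shows "card (Wb s r 0 :: (nat \<Rightarrow> nat \<Rightarrow> 'a) set) = 1"
    and "card (Wb s r 1 :: (nat \<Rightarrow> nat \<Rightarrow> 'a) set) = 1 + s * p"
proof -
  have c0: "card {z\<in>(rowsp r :: (nat \<Rightarrow> 'a) set). row_weight r z = 0} = 1" by (rule cnt0)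
  have c1: "card {z\<in>(rowsp r :: (nat \<Rightarrow> 'a) set). row_weight r z = 1} = p"
    using cnt1[of r, where 'a='a] assms by simp
  then have c1': "card {z\<in>(rowsp r :: (nat \<Rightarrow> 'a) set). row_weight r z = Suc 0} = p" by simp
  show A: "card (Wb s r 0 :: (nat \<Rightarrow> nat \<Rightarrow> 'a) set) = 1" for s
    by (induction s) (simp_all add: W0 card_W_Suc c0)
  show "card (Wb s r 1 :: (nat \<Rightarrow> nat \<Rightarrow> 'a) set) = 1 + s * p"
    by (induction s) (simp_all add: W0 card_W_Suc c0 c1' A atMost_Suc)
qed

lemma N42:
  assumes "2 \<le> r" and q: "card (UNIV::'a::{zero,finite} set) = Suc p"
  shows "card (Wb 4 r 2 :: (nat \<Rightarrow> nat \<Rightarrow> 'a) set) = 10*p^2 + 8*p + 1"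
proof -
  have c0: "card {z\<in>(rowsp r :: (nat \<Rightarrow> 'a) set). row_weight r z = 0} = 1" by (rule cnt0)
  have c1: "card {z\<in>(rowsp r :: (nat \<Rightarrow> 'a) set). row_weight r z = 1} = p"
    using cnt1[of r, where 'a='a] assms by simp
  have c2: "card {z\<in>(rowsp r :: (nat \<Rightarrow> 'a) set). row_weight r z = 2} = Suc p * p"
    using cnt2[of r, where 'a='a] assms by simp
  have c1': "card {z\<in>(rowsp r :: (nat \<Rightarrow> 'a) set). row_weight r z = Suc 0} = p" using c1 by simp
  have c2': "card {z\<in>(rowsp r :: (nat \<Rightarrow> 'a) set). row_weight r z = Suc (Suc 0)} = Suc p * p" using c2 by (simp add: numeral_2_eq_2)
  have S: "card (Wb (Suc s) r 2 :: (nat \<Rightarrow> nat \<Rightarrow> 'a) set) = card (Wb s r 2 :: (nat \<Rightarrow> nat \<Rightarrow> 'a) set) + p * (1 + s*p) + Suc p * p" for s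
    using N_formula[OF assms] by (simp add: card_W_Suc c0 c1' c2' atMost_Suc numeral_2_eq_2 algebra_simps)
  have "card (Wb 4 r 2 :: (nat \<Rightarrow> nat \<Rightarrow> 'a) set) = card (Wb (Suc (Suc (Suc (Suc 0)))) r 2 :: (nat \<Rightarrow> nat \<Rightarrow> 'a) set)"
    by (simp add: numeral_eq_Suc)
  also have "\<dots> = 10*p^2 + 8*p + 1" unfolding S W0 by (simp add: algebra_simps power2_eq_square)
  finally show ?thesis .
qed


lemma card_rowsp: "card (rowsp r :: (nat \<Rightarrow> 'a::{zero,finite}) set) = card (UNIV::'a set) ^ r"
proof (induction r)
  case 0
  have "rowsp 0 = {(\<lambda>_. 0) :: nat \<Rightarrow> 'a}" by (auto simp: rowsp_def)
  then show ?case by simp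
next
  case (Suc r) then show ?case
    by (simp add: rowsp_Suc card_image[OF rowsp_inj] card_cartesian_product)
qed

lemma card_mat: "card (mat_space s r :: (nat \<Rightarrow> nat \<Rightarrow> 'a::{zero,finite}) set) = card (UNIV::'a set) ^ (r*s)"
proof (induction s)
  case 0
  have "mat_space 0 r = {(\<lambda>_ _. 0) :: nat \<Rightarrow> nat \<Rightarrow> 'a}" by (auto simp: mat_space_def)
  then show ?case by simp
next
  case (Suc s) then show ?case
    by (simp add: mat_Suc card_image[OF mat_inj] card_cartesian_product card_rowsp power_add)
qed

lemma ball_transl:
  fixes c :: "nat \<Rightarrow> nat \<Rightarrow> 'a::group_add"
  assumes c: "c \<in> mat_space s r"
  shows "nrt_ball s r c R = (\<lambda>y i j. y i j + c i j) ` (Wb s r R :: (nat \<Rightarrow> nat \<Rightarrow> 'a::group_add) set)"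
proof (rule set_eqI, rule iffI)
  fix x assume x: "x \<in> nrt_ball s r c R"
  let ?y = "\<lambda>i j. x i j - c i j"
  have "?y \<in> Wb s r R" using x c by (auto simp: nrt_ball_def Wb_def mat_space_def nrt_dist_def)
  moreover have "x = (\<lambda>i j. ?y i j + c i j)" by simp
  ultimately show "x \<in> (\<lambda>y i j. y i j + c i j) ` Wb s r R" by (intro image_eqI[where x="?y"]) simp_all
next
  fix x assume "x \<in> (\<lambda>y i j. y i j + c i j) ` (Wb s r R :: (nat \<Rightarrow> nat \<Rightarrow> 'a) set)"
  then obtain y where y: "y \<in> Wb s r R" "x = (\<lambda>i j. y i j + c i j)" by auto
  have "(\<lambda>i j. x i j - c i j) = y" using y(2) by simp
  then show "x \<in> nrt_ball s r c R" using y c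
    by (auto simp: nrt_ball_def Wb_def mat_space_def nrt_dist_def)
qed

lemma card_ball:
  fixes c :: "nat \<Rightarrow> nat \<Rightarrow> 'a::group_add"
  assumes c: "c \<in> mat_space s r"
  shows "card (nrt_ball s r c R) = card (Wb s r R :: (nat \<Rightarrow> nat \<Rightarrow> 'a::group_add) set)"
proof -
  have "inj_on (\<lambda>y i j. y i j + c i j) (Wb s r R :: (nat \<Rightarrow> nat \<Rightarrow> 'a) set)"
    by (rule inj_onI) (auto simp: fun_eq_iff)
  then show ?thesis unfolding ball_transl[OF c] by (rule card_image)
qed

lemma perfect_card:
  assumes "perfect_code s r R (C :: (nat \<Rightarrow> nat \<Rightarrow> 'a::{group_add,finite}) set)"
  shows "card (mat_space s r :: (nat \<Rightarrow> nat \<Rightarrow> 'a) set) = card C * card (Wb s r R :: (nat \<Rightarrow> nat \<Rightarrow> 'a) set)"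
proof -
  have CV: "C \<subseteq> mat_space s r" and dj: "\<forall>c\<in>C. \<forall>c'\<in>C. c \<noteq> c' \<longrightarrow> nrt_ball s r c R \<inter> nrt_ball s r c' R = {}"
    and U: "(\<Union>c\<in>C. nrt_ball s r c R) = mat_space s r"
    using assms by (auto simp: perfect_code_def)
  have fC: "finite C" using CV finite_mat finite_subset by blast
  have fB: "\<forall>c\<in>C. finite (nrt_ball s r c R)"
    using finite_mat[of s r] by (auto simp: nrt_ball_def)
  have "card (mat_space s r :: (nat \<Rightarrow> nat \<Rightarrow> 'a) set) = (\<Sum>c\<in>C. card (nrt_ball s r c R))"
    unfolding U[symmetric] by (rule card_UN_disjoint[OF fC]) (use fB dj in auto)
  also have "\<dots> = (\<Sum>c\<in>C. card (Wb s r R :: (nat \<Rightarrow> nat \<Rightarrow> 'a) set))"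
    using CV card_ball[where 'a='a] by (intro sum.cong) auto
  finally show ?thesis by simp
qed

lemma nt_aux:
  fixes p n :: nat
  assumes "p \<ge> 1"
  shows "\<not> (10*p^2 + 8*p + 1) dvd (Suc p)^n"
proof
  define N where "N = 10*p^2 + 8*p + 1"
  define q where "q = Suc p"
  assume "(10*p^2 + 8*p + 1) dvd (Suc p)^n"
  then have d: "N dvd q^n" by (simp add: N_def q_def)
  have eq: "N + 12*q = 10*q^2 + 3" by (simp add: N_def q_def power2_eq_square algebra_simps)
  have only3: "t = 3" if t: "prime t" "t dvd N" for t
  proof -
    have "t dvd q^n" using t d dvd_trans by blast
    then have tq: "t dvd q" using prime_dvd_power[OF t(1)] by blast
    have "t dvd 10*q^2" using tq by (simp add: power2_eq_square)
    moreover have "t dvd N + 12*q" using t tq by simp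
    moreover have "t dvd 10*q^2 + 3" using \<open>t dvd N + 12*q\<close> unfolding eq .
    ultimately have "t dvd 3" using dvd_add_right_iff by blast
    then have "t \<le> 3" by (rule dvd_imp_le) simp
    moreover have "t > 1" using t(1) prime_gt_1_nat by blast
    moreover have "t \<noteq> 2" using \<open>t dvd 3\<close> by (metis even_numeral odd_numeral)
    ultimately show "t = 3" by linarith
  qed
  have "p^2 \<ge> 1" using assms by simp
  then have N1: "N \<ge> 19" using assms unfolding N_def by linarith
  obtain t where t: "prime t" "t dvd N" using prime_factor_nat[of N] N1 by auto
  have "t = 3" using only3 t by blast
  then have d3: "3 dvd N" using t by simp
  have "3 dvd q"
  proof -
    have "(3::nat) dvd q^n" using d3 d dvd_trans by blast
    then show ?thesis using prime_dvd_power[of "3::nat"] by simp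
  qed
  then obtain k where k: "q = 3*k" by blast
  obtain M where M: "N = 3*M" using d3 by blast
  have eqM: "M + 12*k = 30*k^2 + 1" using eq k M by (simp add: power2_eq_square algebra_simps)
  have "M \<noteq> 1" using M N1 by auto
  then obtain u where u: "prime u" "u dvd M" using prime_factor_nat[of M] by auto
  then have "u dvd N" using M by simp
  then have "u = 3" using only3 u by blast
  then have "3 dvd M" using u by simp
  moreover have "(3::nat) dvd 12*k" by simp
  ultimately have "3 dvd M + 12*k" by (rule dvd_add)
  then have "3 dvd 30*k^2 + 1" unfolding eqM .
  moreover have "(3::nat) dvd 30*k^2"
  proof -
    have "(30::nat)*k^2 = 3*(10*k^2)" by simp
    then show ?thesis by (metis dvd_triv_left)
  qed
  ultimately have "(3::nat) dvd 1" using dvd_add_right_iff by blast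
  then show False by simp
qed

theorem mainTheorem14:
  fixes h :: nat
  assumes "h > 0"
  shows "\<exists>s r R :: nat. s \<ge> 2 \<and> r \<ge> 2 \<and> R > 0 \<and>
           (int r + 1) * (int R + 1) - int s * int r - 1 = - int h \<and>
           Perf s r R = ({} :: (nat \<Rightarrow> nat \<Rightarrow> 'a::{field,finite}) set set)"
proof (intro exI conjI)
  show "(2::nat) \<le> 4" "2 \<le> h + 2" "(0::nat) < 2" by simp_all
  show "(int (h+2) + 1) * (int 2 + 1) - int 4 * int (h+2) - 1 = - int h" by simp
  show "Perf 4 (h+2) 2 = ({} :: (nat \<Rightarrow> nat \<Rightarrow> 'a::{field,finite}) set set)"
  proof (rule ccontr)
    assume "Perf 4 (h+2) 2 \<noteq> ({} :: (nat \<Rightarrow> nat \<Rightarrow> 'a::{field,finite}) set set)"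
    then obtain C :: "(nat \<Rightarrow> nat \<Rightarrow> 'a) set" where "perfect_code 4 (h+2) 2 C"
      by (auto simp: Perf_def)
    then have e: "card (mat_space 4 (h+2) :: (nat \<Rightarrow> nat \<Rightarrow> 'a) set) = card C * card (Wb 4 (h+2) 2 :: (nat \<Rightarrow> nat \<Rightarrow> 'a) set)"
      by (rule perfect_card)
    define p where "p = card (UNIV::'a set) - 1"
    have "card {0::'a, 1} \<le> card (UNIV::'a set)" by (rule card_mono) auto
    then have c2: "card (UNIV::'a set) \<ge> 2" by simp
    then have q: "card (UNIV::'a set) = Suc p" and p1: "p \<ge> 1" by (auto simp: p_def)
    have "card (Wb 4 (h+2) 2 :: (nat \<Rightarrow> nat \<Rightarrow> 'a) set) = 10*p^2 + 8*p + 1"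
      by (rule N42[OF _ q]) simp
    then have "(10*p^2 + 8*p + 1) dvd (Suc p)^((h+2)*4)"
    proof -
      have "(Suc p)^((h+2)*4) = card C * (10*p^2 + 8*p + 1)"
        using e card_mat[of 4 "h+2", where 'a='a] q \<open>card (Wb 4 (h+2) 2 :: (nat \<Rightarrow> nat \<Rightarrow> 'a) set) = 10*p^2 + 8*p + 1\<close> by simp
      then show ?thesis by (metis dvd_triv_right)
    qed
    then show False using nt_aux[OF p1] by blast
  qed
qed

end
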